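(* Let $\mathcal{L}:\mathbb{R}^d\to\mathbb{R}$ be differentiable with $\nabla\mathcal{L}$ Lipschitz continuous with constant $L$. Run full-batch MoFO with $\beta_1<\sqrt{\beta_2}<1$, $\epsilon=0$ and learning rates $\eta_t=\eta/\sqrt t$ ($\eta>0$). Then for every iteration $t\ge1$, $$\left\|\frac{m_t}{1-\beta_1^t}-g_t\right\|_1\le\frac{2\sqrt2\,\beta_1\sqrt d\,LC\eta}{(1-\beta_1)^2\sqrt t},$$ where $C=\dfrac{\sqrt{d\cdot(\alpha\%)+B}}{\sqrt{1-\beta_2}\,(1-\beta_1/\sqrt{\beta_2})}$.
   Context: The coordinates of $\mathbb{R}^d$ are partitioned into $B$ blocks of sizes $d_1,\dots,d_B$ with $\sum_kd_k=d$. Fix $\alpha\%\in(0,1]$. For $z\in\mathbb{R}^d$, $\texttt{FLT}_\alpha(z)\in\{0,1\}^d$ equals, in each block $k$, $1$ exactly on a set of $\lceil d_k\cdot\alpha\%\rceil$ indices with the largest absolute values of $z$ within that block (ties broken in favour of smaller indices), and $0$ elsewhere. Full-batch MoFO with $\beta_1,\beta_2\in(0,1)$, learning rates $\eta_t>0$, initial point $\theta_0$: $m_0=v_0=0$; for $t\ge1$, $g_t=\nabla\mathcal{L}(\theta_{t-1})$, $m_t=\beta_1m_{t-1}+(1-\beta_1)g_t$, $v_t=\beta_2v_{t-1}+(1-\beta_2)g_t\odot g_t$, $\hat m_t=m_t/(1-\beta_1^t)$, $\hat v_t=v_t/(1-\beta_2^t)$, $\theta_t=\theta_{t-1}-\eta_t(\hat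 m_t\odot\texttt{FLT}_\alpha(m_t))/\sqrt{\hat v_t}$ entrywise ($\epsilon=0$: no additive constant in the denominator; a quotient with $\hat v_{i,t}=0$ is taken as $0$). *)

theory Defs
  imports "HOL-Analysis.Analysis"
begin

text \<open>Coordinates are indexed by a finite linearly ordered type 'n (so d = CARD('n));
  the linear order is used for tie-breaking.  A block structure with B blocks is a
  map blk assigning to each coordinate its block number (< B).\<close>

definition block_of :: "('n \<Rightarrow> nat) \<Rightarrow> 'n \<Rightarrow> 'n set" where
  "block_of blk i = {j. blk j = blk i}"

text \<open>FLT_alpha(z): in every block, 1 exactly on the ceil(d_k * alpha) indices that come first
  in the strict order "larger |z_j|, ties broken by smaller index", 0 elsewhere.\<close>
definition flt :: "real \<Rightarrow> ('n \<Rightarrow> nat) \<Rightarrow> (real, 'n::{finite,linorder}) vec \<Rightarrow> (real, 'n) vec" where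
  "flt \<alpha> blk z = (\<chi> i.
     if int (card {j \<in> block_of blk i. \<bar>z$j\<bar> > \<bar>z$i\<bar> \<or> (\<bar>z$j\<bar> = \<bar>z$i\<bar> \<and> j < i)})
          < \<lceil>real (card (block_of blk i)) * \<alpha>\<rceil>
     then 1 else 0)"

text \<open>Full-batch MoFO with epsilon = 0.  State after t steps: (theta_t, m_t, v_t).
  G is the gradient, eta the learning-rate sequence (eta t = eta_t).\<close>
fun mofo :: "((real, 'n::{finite,linorder}) vec \<Rightarrow> (real, 'n) vec) \<Rightarrow> real \<Rightarrow> ('n \<Rightarrow> nat) \<Rightarrow> real \<Rightarrow> real
      \<Rightarrow> (nat \<Rightarrow> real) \<Rightarrow> (real, 'n) vec \<Rightarrow> nat \<Rightarrow> (real, 'n) vec \<times> (real, 'n) vec \<times> (real, 'n) vec" where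
  "mofo G \<alpha> blk \<beta>1 \<beta>2 \<eta> \<theta>0 0 = (\<theta>0, 0, 0)"
| "mofo G \<alpha> blk \<beta>1 \<beta>2 \<eta> \<theta>0 (Suc t) =
     (let (\<theta>, m, v) = mofo G \<alpha> blk \<beta>1 \<beta>2 \<eta> \<theta>0 t;
          g = G \<theta>;
          m' = \<beta>1 *\<^sub>R m + (1 - \<beta>1) *\<^sub>R g;
          v' = \<beta>2 *\<^sub>R v + (1 - \<beta>2) *\<^sub>R (\<chi> i. (g$i) * (g$i));
          mh = (1 / (1 - \<beta>1 ^ Suc t)) *\<^sub>R m';
          vh = (1 / (1 - \<beta>2 ^ Suc t)) *\<^sub>R v';
          mask = flt \<alpha> blk m';
          \<theta>' = (\<chi> i. \<theta>$i - \<eta> (Suc t) *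
                  (if vh$i = 0 then 0 else (mh$i * mask$i) / sqrt (vh$i)))
      in (\<theta>', m', v'))"

definition mofo_theta where "mofo_theta G \<alpha> blk \<beta>1 \<beta>2 \<eta> \<theta>0 t = fst (mofo G \<alpha> blk \<beta>1 \<beta>2 \<eta> \<theta>0 t)"
definition mofo_m where "mofo_m G \<alpha> blk \<beta>1 \<beta>2 \<eta> \<theta>0 t = fst (snd (mofo G \<alpha> blk \<beta>1 \<beta>2 \<eta> \<theta>0 t))"
definition mofo_v where "mofo_v G \<alpha> blk \<beta>1 \<beta>2 \<eta> \<theta>0 t = snd (snd (mofo G \<alpha> blk \<beta>1 \<beta>2 \<eta> \<theta>0 t))"

definition norm1 :: "(real, 'n::finite) vec \<Rightarrow> real" where
  "norm1 x = (\<Sum>i\<in>UNIV. \<bar>x$i\<bar>)"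

end

theory Submission
  imports Defs
begin


lemma geom_le:
  fixes x :: real assumes "0 \<le> x" "x < 1"
  shows "(\<Sum>j<n. x ^ j) \<le> 1 / (1 - x)"
proof -
  have "(\<Sum>j<n. x ^ j) = (1 - x ^ n) / (1 - x)" using assms sum_gp_strict[of x n] by simp
  also have "\<dots> \<le> 1 / (1 - x)" using assms by (intro divide_right_mono) auto
  finally show ?thesis .
qed

lemma ratio_core:
  fixes b1 b2 :: real and g :: "nat \<Rightarrow> real"
  assumes b: "0 < b1" "b1 < sqrt b2" "0 < b2" "b2 < 1" and r: "1 \<le> r"
  shows "((1 / (1 - b1 ^ r)) * ((1 - b1) * (\<Sum>j<r. b1 ^ j * g j)))\<^sup>2
     \<le> (1 / ((1 - b2) * (1 - b1 / sqrt b2)\<^sup>2)) * ((1 / (1 - b2 ^ r)) * ((1 - b2) * (\<Sum>j<r. b2 ^ j * (g j)\<^sup>2)))"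
proof -
  define \<gamma> where "\<gamma> = b1 / sqrt b2"
  have sb: "0 < sqrt b2" "sqrt b2 < 1" using b by auto
  have g0: "0 < \<gamma>" "\<gamma> < 1" using b sb unfolding \<gamma>_def by (auto simp: field_simps)
  define V where "V = (\<Sum>j<r. b2 ^ j * (g j)\<^sup>2)"
  have V0: "0 \<le> V" unfolding V_def using b by (intro sum_nonneg) auto
  have eq: "b1 ^ j * g j = \<gamma> ^ j * (sqrt b2 ^ j * g j)" for j
    unfolding \<gamma>_def using sb by (simp add: power_divide)
  have CS: "(\<Sum>j<r. b1 ^ j * g j)\<^sup>2 \<le> (\<Sum>j<r. (\<gamma> ^ j)\<^sup>2) * (\<Sum>j<r. (sqrt b2 ^ j * g j)\<^sup>2)"
    unfolding eq by (rule Cauchy_Schwarz_ineq_sum)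
  have VV: "(\<Sum>j<r. (sqrt b2 ^ j * g j)\<^sup>2) = V"
    unfolding V_def using b by (simp add: power_mult_distrib real_sqrt_power[symmetric])
  have GG: "(\<Sum>j<r. (\<gamma> ^ j)\<^sup>2) \<le> 1 / (1 - \<gamma>)\<^sup>2"
  proof -
    have "(\<Sum>j<r. (\<gamma> ^ j)\<^sup>2) \<le> (\<Sum>j<r. \<gamma> ^ j)"
      using g0 by (intro sum_mono) (auto simp: power2_eq_square intro!: mult_left_le_one_le zero_le_power power_le_one)
    also have "\<dots> \<le> 1 / (1 - \<gamma>)" using geom_le g0 by auto
    also have "\<dots> \<le> 1 / (1 - \<gamma>)\<^sup>2" using g0
      by (intro divide_left_mono) (auto simp: power2_eq_square intro!: mult_left_le_one_le)
    finally show ?thesis .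
  qed
  have S: "(\<Sum>j<r. b1 ^ j * g j)\<^sup>2 \<le> V / (1 - \<gamma>)\<^sup>2"
  proof -
    have "(\<Sum>j<r. (\<gamma> ^ j)\<^sup>2) * V \<le> 1 / (1 - \<gamma>)\<^sup>2 * V"
      using GG V0 by (rule mult_right_mono)
    then show ?thesis using CS VV by simp
  qed
  have b1lt: "b1 < 1" using b sb by linarith
  have p1: "1 - b1 \<le> 1 - b1 ^ r" using b r b1lt
    using power_decreasing[of 1 r b1] by simp
  have p1': "0 < 1 - b1" using b1lt by simp
  have "((1 / (1 - b1 ^ r)) * ((1 - b1) * (\<Sum>j<r. b1 ^ j * g j)))\<^sup>2
      = ((1 - b1) / (1 - b1 ^ r))\<^sup>2 * (\<Sum>j<r. b1 ^ j * g j)\<^sup>2" by (simp add: power_mult_distrib power_divide)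
  also have "\<dots> \<le> 1 * (\<Sum>j<r. b1 ^ j * g j)\<^sup>2"
    using p1 p1' by (intro mult_right_mono) (auto simp: power_le_one)
  also have "\<dots> \<le> V / (1 - \<gamma>)\<^sup>2" using S by simp
  also have "\<dots> \<le> (1 / ((1 - b2) * (1 - \<gamma>)\<^sup>2)) * ((1 / (1 - b2 ^ r)) * ((1 - b2) * V))"
  proof -
    have q: "0 < 1 - b2 ^ r" "1 - b2 ^ r \<le> 1" using b r by (auto simp: power_less_one_iff)
    have "V \<le> V / (1 - b2 ^ r)" using q V0 by (simp add: le_divide_eq mult_left_le)
    moreover have "(1 / ((1 - b2) * (1 - \<gamma>)\<^sup>2)) * ((1 / (1 - b2 ^ r)) * ((1 - b2) * V)) = (V / (1 - b2 ^ r)) / (1 - \<gamma>)\<^sup>2"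
      using b by simp
    ultimately show ?thesis by (metis divide_right_mono zero_le_power2)
  qed
  finally show ?thesis unfolding V_def \<gamma>_def .
qed



lemma card_blocks:
  fixes blk :: "'n::finite \<Rightarrow> nat"
  assumes "\<And>i. blk i < B"
  shows "(\<Sum>k<B. card {i. blk i = k}) = CARD('n)"
proof -
  have "(\<Sum>k<B. card {i. blk i = k}) = (\<Sum>k<B. \<Sum>i\<in>UNIV. if blk i = k then 1 else 0)"
    by (simp add: sum.If_cases)
  also have "\<dots> = (\<Sum>i\<in>(UNIV::'n set). \<Sum>k<B. if blk i = k then 1 else 0)"
    by (rule sum.swap)
  also have "\<dots> = (\<Sum>i\<in>(UNIV::'n set). 1)"
    using assms by (intro sum.cong) (auto simp: sum.delta')
  finally show ?thesis by simp
qed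

lemma flt_card:
  fixes z :: "(real, 'n::{finite,linorder}) vec"
  assumes blocks: "\<And>i. blk i < B" and a: "0 \<le> \<alpha>"
  shows "real (card {i. flt \<alpha> blk z $ i \<noteq> 0}) \<le> real CARD('n) * \<alpha> + real B"
proof -
  define prec where "prec j i \<longleftrightarrow> \<bar>z$j\<bar> > \<bar>z$i\<bar> \<or> (\<bar>z$j\<bar> = \<bar>z$i\<bar> \<and> j < i)" for j i
  define P where "P i = {j \<in> block_of blk i. prec j i}" for i
  define S where "S k = {i. blk i = k \<and> flt \<alpha> blk z $ i \<noteq> 0}" for k
  define c where "c k = real (card {i. blk i = k}) * \<alpha>" for k
  have fltD: "flt \<alpha> blk z $ i \<noteq> 0 \<Longrightarrow> int (card (P i)) < \<lceil>real (card (block_of blk i)) * \<alpha>\<rceil>" for i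
    unfolding flt_def P_def prec_def by (auto split: if_splits)
  have U: "{i. flt \<alpha> blk z $ i \<noteq> 0} = (\<Union>k<B. S k)"
    unfolding S_def using blocks by auto
  have Sk: "card (S k) \<le> nat \<lceil>c k\<rceil>" for k
  proof -
    have inj: "inj_on (\<lambda>i. card (P i)) (S k)"
    proof (rule inj_onI, rule ccontr)
      fix i i' assume i: "i \<in> S k" and i': "i' \<in> S k" and e: "card (P i) = card (P i')" and ne: "i \<noteq> i'"
      have bl: "block_of blk i = block_of blk i'" using i i' unfolding S_def block_of_def by auto
      have lt: "card (P a) < card (P b)" if "prec a b" "block_of blk a = block_of blk b" for a b
      proof (rule psubset_card_mono)
        show "finite (P b)" by simp
        have "P a \<subseteq> P b" unfolding P_def using that unfolding prec_def by auto
        moreover have "a \<in> P b" "a \<notin> P a" unfolding P_def using that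
          by (auto simp: prec_def block_of_def)
        ultimately show "P a \<subset> P b" by blast
      qed
      have "prec i i' \<or> prec i' i" using ne unfolding prec_def by auto
      then show False using lt bl e by (metis less_irrefl)
    qed
    have img: "(\<lambda>i. card (P i)) ` S k \<subseteq> {..< nat \<lceil>c k\<rceil>}"
    proof
      fix x assume "x \<in> (\<lambda>i. card (P i)) ` S k"
      then obtain i where i: "i \<in> S k" and x: "x = card (P i)" by auto
      have "block_of blk i = {i. blk i = k}" using i unfolding S_def block_of_def by auto
      then have "int (card (P i)) < \<lceil>c k\<rceil>" using fltD[of i] i unfolding S_def c_def by auto
      then show "x \<in> {..< nat \<lceil>c k\<rceil>}" using x by auto
    qed
    show ?thesis using card_inj_on_le[OF inj img] by simp
  qed
  have "card {i. flt \<alpha> blk z $ i \<noteq> 0} \<le> (\<Sum>k<B. card (S k))"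
    unfolding U by (rule card_UN_le) simp
  then have "real (card {i. flt \<alpha> blk z $ i \<noteq> 0}) \<le> (\<Sum>k<B. real (card (S k)))"
    by (metis of_nat_le_iff of_nat_sum)
  also have "\<dots> \<le> (\<Sum>k<B. c k + 1)"
  proof (rule sum_mono)
    fix k
    have "0 \<le> c k" unfolding c_def using a by simp
    then have "real (nat \<lceil>c k\<rceil>) \<le> c k + 1" by linarith
    then show "real (card (S k)) \<le> c k + 1" using Sk[of k]
      by (meson of_nat_le_iff order_trans)
  qed
  also have "\<dots> = real CARD('n) * \<alpha> + real B"
  proof -
    have cb: "(\<Sum>k<B. card {i. blk i = k}) = CARD('n)" by (rule card_blocks) (rule blocks)
    have "(\<Sum>k<B. real (card {i. blk i = k})) = real CARD('n)" by (metis of_nat_sum cb)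
    then show ?thesis unfolding c_def sum.distrib by (simp add: sum_distrib_right[symmetric])
  qed
  finally show ?thesis .
qed



lemma S_ident:
  fixes b :: real
  shows "(1 - b)^3 * (\<Sum>j<t. real j * (real j + 1) * b ^ j)
     = 2 * b - b ^ t * (2 * b + 2 * real t * b * (1 - b) + real t * (real t + 1) * (1 - b)\<^sup>2)"
proof (induction t)
  case 0 then show ?case by simp
next
  case (Suc t)
  have "(1 - b)^3 * (\<Sum>j<Suc t. real j * (real j + 1) * b ^ j)
     = (1 - b)^3 * (\<Sum>j<t. real j * (real j + 1) * b ^ j) + (1 - b)^3 * (real t * (real t + 1) * b ^ t)"
    by (simp add: algebra_simps)
  also have "\<dots> = 2 * b - b ^ t * (2 * b + 2 * real t * b * (1 - b) + real t * (real t + 1) * (1 - b)\<^sup>2)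
     + (1 - b)^3 * (real t * (real t + 1) * b ^ t)" using Suc by simp
  also have "\<dots> = 2 * b - b ^ Suc t * (2 * b + 2 * real (Suc t) * b * (1 - b) + real (Suc t) * (real (Suc t) + 1) * (1 - b)\<^sup>2)"
    by (simp add: algebra_simps power2_eq_square power3_eq_cube)
  finally show ?case .
qed

lemma S_bound:
  fixes b :: real
  assumes "0 < b" "b < 1" "1 \<le> t"
  shows "(1 - b) / (1 - b ^ t) * (\<Sum>j<t. real j * (real j + 1) * b ^ j) \<le> 2 * b / (1 - b)\<^sup>2"
proof -
  define S where "S = (\<Sum>j<t. real j * (real j + 1) * b ^ j)"
  have q: "0 < 1 - b ^ t" using assms by (simp add: power_less_one_iff)
  have "(1 - b)^3 * S \<le> 2 * b - b ^ t * (2 * b)"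
    unfolding S_def S_ident using assms
    by (intro diff_left_mono mult_left_mono) (auto intro!: add_nonneg_nonneg mult_nonneg_nonneg)
  also have "\<dots> = 2 * b * (1 - b ^ t)" by (simp add: algebra_simps)
  finally have h: "(1 - b)^3 * S \<le> 2 * b * (1 - b ^ t)" .
  have "(1 - b) / (1 - b ^ t) * S = ((1 - b)^3 * S) / ((1 - b ^ t) * (1 - b)\<^sup>2)"
  proof -
    have gen: "\<And>u w S::real. u \<noteq> 0 \<Longrightarrow> w \<noteq> 0 \<Longrightarrow> u / w * S = (u^3*S)/(w*u\<^sup>2)"
      by (simp add: field_simps power2_eq_square power3_eq_cube)
    show ?thesis by (rule gen) (use assms q in auto)
  qed
  also have "\<dots> \<le> (2 * b * (1 - b ^ t)) / ((1 - b ^ t) * (1 - b)\<^sup>2)"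
    using h q assms by (intro divide_right_mono) auto
  also have "\<dots> = 2 * b / (1 - b)\<^sup>2" using q by simp
  finally show ?thesis unfolding S_def .
qed



context
  fixes G :: "(real, 'n::{finite,linorder}) vec \<Rightarrow> (real, 'n) vec"
    and \<alpha> \<beta>1 \<beta>2 :: real and blk :: "'n \<Rightarrow> nat" and \<eta> :: "nat \<Rightarrow> real" and \<theta>0 :: "(real, 'n) vec"
begin

abbreviation "TH \<equiv> mofo_theta G \<alpha> blk \<beta>1 \<beta>2 \<eta> \<theta>0"
abbreviation "MM \<equiv> mofo_m G \<alpha> blk \<beta>1 \<beta>2 \<eta> \<theta>0"
abbreviation "VV \<equiv> mofo_v G \<alpha> blk \<beta>1 \<beta>2 \<eta> \<theta>0"

lemma mofo_split: "mofo G \<alpha> blk \<beta>1 \<beta>2 \<eta> \<theta>0 t = (TH t, MM t, VV t)"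
  by (simp add: mofo_m_def mofo_theta_def mofo_v_def)

lemma mofo_Suc_expl: "mofo G \<alpha> blk \<beta>1 \<beta>2 \<eta> \<theta>0 (Suc t) =
   ((\<chi> i. TH t $ i - \<eta> (Suc t) *
     (if ((1 / (1 - \<beta>2 ^ Suc t)) *\<^sub>R (\<beta>2 *\<^sub>R VV t + (1 - \<beta>2) *\<^sub>R (\<chi> i. (G (TH t)$i) * (G (TH t)$i)))) $ i = 0 then 0 else
       (((1 / (1 - \<beta>1 ^ Suc t)) *\<^sub>R (\<beta>1 *\<^sub>R MM t + (1 - \<beta>1) *\<^sub>R G (TH t))) $ i * flt \<alpha> blk (\<beta>1 *\<^sub>R MM t + (1 - \<beta>1) *\<^sub>R G (TH t)) $ i) /
        sqrt (((1 / (1 - \<beta>2 ^ Suc t)) *\<^sub>R (\<beta>2 *\<^sub>R VV t + (1 - \<beta>2) *\<^sub>R (\<chi> i. (G (TH t)$i) * (G (TH t)$i)))) $ i))),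
    \<beta>1 *\<^sub>R MM t + (1 - \<beta>1) *\<^sub>R G (TH t),
    \<beta>2 *\<^sub>R VV t + (1 - \<beta>2) *\<^sub>R (\<chi> i. (G (TH t)$i) * (G (TH t)$i)))"
  by (simp only: mofo.simps mofo_split Let_def prod.case)

lemma m_Suc: "MM (Suc t) = \<beta>1 *\<^sub>R MM t + (1 - \<beta>1) *\<^sub>R G (TH t)"
  using mofo_Suc_expl[of t] by (simp add: mofo_m_def)

lemma v_Suc: "VV (Suc t) = \<beta>2 *\<^sub>R VV t + (1 - \<beta>2) *\<^sub>R (\<chi> i. (G (TH t)$i) * (G (TH t)$i))"
  using mofo_Suc_expl[of t] by (simp add: mofo_v_def)

lemma th_Suc: "TH (Suc t) = (\<chi> i. TH t $ i - \<eta> (Suc t) *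
     (if ((1 / (1 - \<beta>2 ^ Suc t)) *\<^sub>R VV (Suc t)) $ i = 0 then 0 else
       (((1 / (1 - \<beta>1 ^ Suc t)) *\<^sub>R MM (Suc t)) $ i * flt \<alpha> blk (MM (Suc t)) $ i) /
        sqrt (((1 / (1 - \<beta>2 ^ Suc t)) *\<^sub>R VV (Suc t)) $ i)))"
  using mofo_Suc_expl[of t] unfolding mofo_theta_def m_Suc v_Suc by simp

lemma m_closed: "MM t = (1 - \<beta>1) *\<^sub>R (\<Sum>j<t. \<beta>1 ^ j *\<^sub>R G (TH (t - 1 - j)))"
proof (induction t)
  case 0 then show ?case by (simp add: mofo_m_def)
next
  case (Suc t)
  have "(\<Sum>j<Suc t. \<beta>1 ^ j *\<^sub>R G (TH (Suc t - 1 - j))) = G (TH t) + \<beta>1 *\<^sub>R (\<Sum>j<t. \<beta>1 ^ j *\<^sub>R G (TH (t - 1 - j)))"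
    by (subst sum.lessThan_Suc_shift) (simp add: scaleR_sum_right)
  then show ?case unfolding m_Suc Suc.IH by (simp add: scaleR_add_right)
qed

lemma v_closed: "VV t $ i = (1 - \<beta>2) * (\<Sum>j<t. \<beta>2 ^ j * (G (TH (t - 1 - j)) $ i)\<^sup>2)"
proof (induction t)
  case 0 then show ?case by (simp add: mofo_v_def)
next
  case (Suc t)
  have "(\<Sum>j<Suc t. \<beta>2 ^ j * (G (TH (Suc t - 1 - j)) $ i)\<^sup>2) = (G (TH t) $ i)\<^sup>2 + \<beta>2 * (\<Sum>j<t. \<beta>2 ^ j * (G (TH (t - 1 - j)) $ i)\<^sup>2)"
    by (subst sum.lessThan_Suc_shift) (simp add: sum_distrib_left mult.assoc)
  then show ?case unfolding v_Suc by (simp add: Suc.IH power2_eq_square algebra_simps)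
qed


lemma step_bound:
  assumes b: "0 < \<beta>1" "\<beta>1 < sqrt \<beta>2" "0 < \<beta>2" "\<beta>2 < 1"
    and blocks: "\<And>i. blk i < B" and a: "0 \<le> \<alpha>"
  shows "(norm (TH (Suc r) - TH r))\<^sup>2 \<le> (\<eta> (Suc r))\<^sup>2 * (1 / ((1 - \<beta>2) * (1 - \<beta>1 / sqrt \<beta>2)\<^sup>2)) * (real CARD('n) * \<alpha> + real B)"
proof -
  define K2 where "K2 = 1 / ((1 - \<beta>2) * (1 - \<beta>1 / sqrt \<beta>2)\<^sup>2)"
  have K2: "0 \<le> K2" unfolding K2_def using b by simp
  define mh where "mh i = ((1 / (1 - \<beta>1 ^ Suc r)) *\<^sub>R MM (Suc r)) $ i" for i
  define vh where "vh i = ((1 / (1 - \<beta>2 ^ Suc r)) *\<^sub>R VV (Suc r)) $ i" for i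
  define mask where "mask = flt \<alpha> blk (MM (Suc r))"
  define q where "q i = (if vh i = 0 then 0 else mh i * mask $ i / sqrt (vh i))" for i
  have diff: "TH (Suc r) - TH r = (\<chi> i. - (\<eta> (Suc r) * q i))"
    unfolding th_Suc q_def mh_def vh_def mask_def by (simp add: vec_eq_iff)
  have mask01: "mask $ i = 0 \<or> mask $ i = 1" for i unfolding mask_def flt_def by simp
  have vh0: "0 \<le> vh i" for i
  proof -
    have "0 \<le> 1 - \<beta>2 ^ Suc r" using b power_le_one[of \<beta>2 "Suc r"] by simp
    moreover have "0 \<le> VV (Suc r) $ i" unfolding v_closed using b
      by (intro mult_nonneg_nonneg sum_nonneg) auto
    ultimately show ?thesis unfolding vh_def by simp
  qed
  have mv: "(mh i)\<^sup>2 \<le> K2 * vh i" for i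
  proof -
    have "(mh i)\<^sup>2 = ((1 / (1 - \<beta>1 ^ Suc r)) * ((1 - \<beta>1) * (\<Sum>j<Suc r. \<beta>1 ^ j * G (TH (Suc r - 1 - j)) $ i)))\<^sup>2"
      unfolding mh_def m_closed[of "Suc r"] by simp
    also have "\<dots> \<le> K2 * ((1 / (1 - \<beta>2 ^ Suc r)) * ((1 - \<beta>2) * (\<Sum>j<Suc r. \<beta>2 ^ j * (G (TH (Suc r - 1 - j)) $ i)\<^sup>2)))"
      unfolding K2_def by (rule ratio_core[OF b]) simp
    also have "\<dots> = K2 * vh i" unfolding vh_def vector_scaleR_component v_closed[of "Suc r"] by simp
    finally show ?thesis .
  qed
  have qb: "(q i)\<^sup>2 \<le> K2 * (if mask $ i \<noteq> 0 then 1 else 0)" for i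
  proof (cases "vh i = 0")
    case True then show ?thesis unfolding q_def using K2 by simp
  next
    case False
    then have vp: "0 < vh i" using vh0[of i] by simp
    have "(q i)\<^sup>2 = (mh i)\<^sup>2 * (mask $ i)\<^sup>2 / vh i"
      unfolding q_def using False vp by (simp add: power_divide power_mult_distrib)
    also have "\<dots> \<le> K2 * vh i * (mask $ i)\<^sup>2 / vh i"
      using mv[of i] vp by (intro divide_right_mono mult_right_mono) auto
    also have "\<dots> = K2 * (if mask $ i \<noteq> 0 then 1 else 0)"
      using vp mask01[of i] by auto
    finally show ?thesis .
  qed
  have "(norm (TH (Suc r) - TH r))\<^sup>2 = (\<Sum>i\<in>UNIV. (\<eta> (Suc r) * q i)\<^sup>2)"
    unfolding diff norm_vec_def L2_set_def by (simp add: sum_nonneg)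
  also have "\<dots> = (\<eta> (Suc r))\<^sup>2 * (\<Sum>i\<in>UNIV. (q i)\<^sup>2)"
    by (simp add: power_mult_distrib sum_distrib_left)
  also have "\<dots> \<le> (\<eta> (Suc r))\<^sup>2 * (\<Sum>i\<in>UNIV. K2 * (if mask $ i \<noteq> 0 then 1 else 0))"
    by (intro mult_left_mono sum_mono qb) simp
  also have "\<dots> \<le> (\<eta> (Suc r))\<^sup>2 * (K2 * (real CARD('n) * \<alpha> + real B))"
  proof (rule mult_left_mono)
    have "(\<Sum>i\<in>UNIV. K2 * (if mask $ i \<noteq> 0 then 1 else 0)) = K2 * real (card {i. mask $ i \<noteq> 0})"
      by (simp add: sum_distrib_left[symmetric] sum.If_cases)
    also have "\<dots> \<le> K2 * (real CARD('n) * \<alpha> + real B)"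
      unfolding mask_def using flt_card[OF blocks a] K2 by (intro mult_left_mono) auto
    finally show "(\<Sum>i\<in>UNIV. K2 * (if mask $ i \<noteq> 0 then 1 else 0)) \<le> K2 * (real CARD('n) * \<alpha> + real B)" .
  qed simp
  finally show ?thesis unfolding K2_def by (simp add: mult.assoc)
qed

end

lemma norm1_le: "norm1 (x::(real,'n::finite) vec) \<le> sqrt (real CARD('n)) * norm x"
proof -
  have "norm1 x \<le> L2_set (\<lambda>i. x $ i) UNIV * L2_set (\<lambda>i::'n. 1::real) UNIV"
    using L2_set_mult_ineq[of "\<lambda>i. x $ i" "\<lambda>i::'n. 1::real" UNIV] unfolding norm1_def by simp
  also have "L2_set (\<lambda>i. x $ i) UNIV = norm x" unfolding norm_vec_def L2_set_def by simp
  also have "L2_set (\<lambda>i::'n. 1::real) UNIV = sqrt (real CARD('n))" by (simp add: L2_set_constant)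
  finally show ?thesis by (simp add: mult.commute)
qed

lemma inv_sqrt_le:
  fixes a j t :: nat
  assumes "1 \<le> a" "t \<le> (j + 1) * a" "1 \<le> t"
  shows "1 / sqrt (real a) \<le> (real j + 1) / sqrt (real t)"
proof -
  have "sqrt (real t) \<le> sqrt ((real j + 1) * real a)" using assms(2)
    by (metis of_nat_1 of_nat_add of_nat_le_iff of_nat_mult real_sqrt_le_iff)
  also have "\<dots> = sqrt (real j + 1) * sqrt (real a)" by (simp add: real_sqrt_mult)
  also have "\<dots> \<le> (real j + 1) * sqrt (real a)"
  proof (rule mult_right_mono)
    have "sqrt (real j + 1) \<le> sqrt ((real j + 1)\<^sup>2)" by (subst real_sqrt_le_iff) (simp add: power2_eq_square)
    then show "sqrt (real j + 1) \<le> real j + 1" by simp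
  qed simp
  finally have h: "sqrt (real t) \<le> (real j + 1) * sqrt (real a)" .
  have pa: "0 < sqrt (real a)" "0 < sqrt (real t)" using assms by auto
  show ?thesis using h pa by (simp add: field_simps)
qed

theorem lemma5:
  fixes \<L> :: "(real, 'n::{finite,linorder}) vec \<Rightarrow> real"
    and G :: "(real, 'n) vec \<Rightarrow> (real, 'n) vec"
    and Lc \<alpha> \<beta>1 \<beta>2 \<eta> :: real
    and B :: nat and blk :: "'n \<Rightarrow> nat"
    and \<theta>0 :: "(real, 'n) vec" and t :: nat
  assumes grad: "\<And>x. (\<L> has_derivative (\<lambda>h. G x \<bullet> h)) (at x)"
    and lip: "Lc-lipschitz_on UNIV G"
    and blocks: "\<And>i. blk i < B"
    and blocks_nonempty: "\<And>k. k < B \<Longrightarrow> \<exists>i. blk i = k"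
    and alpha: "0 < \<alpha>" "\<alpha> \<le> 1"
    and beta: "0 < \<beta>1" "\<beta>1 < sqrt \<beta>2" "0 < \<beta>2" "\<beta>2 < 1"
    and eta: "0 < \<eta>"
    and t: "1 \<le> t"
  shows "let d = real CARD('n);
             \<eta>s = (\<lambda>s. \<eta> / sqrt (real s));
             m = mofo_m G \<alpha> blk \<beta>1 \<beta>2 \<eta>s \<theta>0 t;
             g = G (mofo_theta G \<alpha> blk \<beta>1 \<beta>2 \<eta>s \<theta>0 (t - 1));
             C = sqrt (d * \<alpha> + real B) / (sqrt (1 - \<beta>2) * (1 - \<beta>1 / sqrt \<beta>2))
         in norm1 ((1 / (1 - \<beta>1 ^ t)) *\<^sub>R m - g)
            \<le> 2 * sqrt 2 * \<beta>1 * sqrt d * Lc * C * \<eta> / ((1 - \<beta>1)\<^sup>2 * sqrt (real t))"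
proof -
  define d where "d = real CARD('n)"
  define \<eta>s where "\<eta>s = (\<lambda>s::nat. \<eta> / sqrt (real s))"
  define C where "C = sqrt (d * \<alpha> + real B) / (sqrt (1 - \<beta>2) * (1 - \<beta>1 / sqrt \<beta>2))"
  define TH where "TH = mofo_theta G \<alpha> blk \<beta>1 \<beta>2 \<eta>s \<theta>0"
  define MM where "MM = mofo_m G \<alpha> blk \<beta>1 \<beta>2 \<eta>s \<theta>0"
  have sb: "0 < sqrt \<beta>2" "sqrt \<beta>2 < 1" using beta by auto
  have b1lt: "\<beta>1 < 1" using beta sb by linarith
  have gam: "0 < 1 - \<beta>1 / sqrt \<beta>2" using beta sb by (simp add: field_simps)
  have dab: "0 \<le> d * \<alpha> + real B" unfolding d_def using alpha by simp
  have C0: "0 \<le> C" unfolding C_def using beta gam dab by simp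
  have Lc0: "0 \<le> Lc" using lip by (rule lipschitz_on_nonneg)
  have step: "norm (TH (Suc r) - TH r) \<le> \<eta> / sqrt (real (Suc r)) * C" for r
  proof (rule power2_le_imp_le)
    have "(norm (TH (Suc r) - TH r))\<^sup>2 \<le> (\<eta>s (Suc r))\<^sup>2 * (1 / ((1 - \<beta>2) * (1 - \<beta>1 / sqrt \<beta>2)\<^sup>2)) * (d * \<alpha> + real B)"
      unfolding TH_def d_def by (rule step_bound[OF beta blocks]) (use alpha in simp)
    also have "\<dots> = (\<eta> / sqrt (real (Suc r)) * C)\<^sup>2"
      unfolding \<eta>s_def C_def using dab beta by (simp add: power_mult_distrib power_divide)
    finally show "(norm (TH (Suc r) - TH r))\<^sup>2 \<le> (\<eta> / sqrt (real (Suc r)) * C)\<^sup>2" .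
    show "0 \<le> \<eta> / sqrt (real (Suc r)) * C" using eta C0 by simp
  qed
  obtain n where n: "t = Suc n" using t by (cases t) auto
  have disp: "j \<le> n \<Longrightarrow> norm (TH n - TH (n - j)) \<le> (\<Sum>i<j. \<eta> / sqrt (real (n - i)) * C)" for j
  proof (induction j)
    case 0 then show ?case by simp
  next
    case (Suc j)
    have e: "n - j = Suc (n - Suc j)" using Suc.prems by simp
    have "norm (TH n - TH (n - Suc j)) \<le> norm (TH n - TH (n - j)) + norm (TH (n - j) - TH (n - Suc j))"
      using norm_triangle_ineq[of "TH n - TH (n - j)" "TH (n - j) - TH (n - Suc j)"] by simp
    also have "\<dots> \<le> (\<Sum>i<j. \<eta> / sqrt (real (n - i)) * C) + \<eta> / sqrt (real (n - j)) * C"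
      using Suc step[of "n - Suc j"] unfolding e[symmetric] by (intro add_mono) auto
    finally show ?case by simp
  qed
  have disp2: "norm (TH n - TH (n - j)) \<le> real j * (real j + 1) * (\<eta> * C / sqrt (real t))" if j: "j \<le> n" for j
  proof -
    have "(\<Sum>i<j. \<eta> / sqrt (real (n - i)) * C) \<le> (\<Sum>i<j. (\<eta> * C) * ((real j + 1) / sqrt (real t)))"
    proof (rule sum_mono)
      fix i assume i: "i \<in> {..<j}"
      have "1 / sqrt (real (n - i)) \<le> (real j + 1) / sqrt (real t)"
      proof (rule inv_sqrt_le)
        show "1 \<le> n - i" using i j by auto
        have "j * (n - i) \<ge> j" using i j by (simp add: Suc_le_eq)
        then show "t \<le> (j + 1) * (n - i)" using i j n by (simp add: algebra_simps)
      qed (use t in simp)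
      then have "(\<eta> * C) * (1 / sqrt (real (n - i))) \<le> (\<eta> * C) * ((real j + 1) / sqrt (real t))"
        using eta C0 by (intro mult_left_mono) auto
      then show "\<eta> / sqrt (real (n - i)) * C \<le> (\<eta> * C) * ((real j + 1) / sqrt (real t))" by simp
    qed
    also have "\<dots> = real j * (real j + 1) * (\<eta> * C / sqrt (real t))" by simp
    finally show ?thesis using disp[OF j] by linarith
  qed
  define c where "c = (1 - \<beta>1) / (1 - \<beta>1 ^ t)"
  have q1: "0 < 1 - \<beta>1 ^ t" using beta b1lt t by (simp add: power_less_one_iff)
  have c0: "0 \<le> c" unfolding c_def using q1 b1lt by simp
  have geo: "(1 - \<beta>1) * (\<Sum>j<t. \<beta>1 ^ j) = 1 - \<beta>1 ^ t"
    by (simp add: one_diff_power_eq)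
  have vec: "(1 / (1 - \<beta>1 ^ t)) *\<^sub>R MM t - G (TH (t - 1))
      = c *\<^sub>R (\<Sum>j<t. \<beta>1 ^ j *\<^sub>R (G (TH (n - j)) - G (TH n)))"
  proof -
    define Sg where "Sg = (\<Sum>j<t. \<beta>1 ^ j *\<^sub>R G (TH (n - j)))"
    define s where "s = (\<Sum>j<t. \<beta>1 ^ j)"
    have e1: "(\<Sum>j<t. \<beta>1 ^ j *\<^sub>R (G (TH (n - j)) - G (TH n))) = Sg - s *\<^sub>R G (TH n)"
      unfolding Sg_def s_def by (simp add: scaleR_diff_right sum_subtractf scaleR_sum_left)
    have e2: "c * s = 1" unfolding c_def s_def using geo q1 b1lt by (simp add: field_simps)
    have e3: "MM t = (1 - \<beta>1) *\<^sub>R Sg" unfolding Sg_def MM_def TH_def m_closed n by simp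
    have e4: "t - 1 = n" using n by simp
    have e5: "(1 / (1 - \<beta>1 ^ t)) *\<^sub>R ((1 - \<beta>1) *\<^sub>R Sg) = c *\<^sub>R Sg" unfolding c_def by simp
    show ?thesis unfolding e1 e3 e4 e5 by (simp add: scaleR_diff_right e2)
  qed
  have "norm ((1 / (1 - \<beta>1 ^ t)) *\<^sub>R MM t - G (TH (t - 1)))
      \<le> c * (\<Sum>j<t. \<beta>1 ^ j * norm (G (TH (n - j)) - G (TH n)))"
    unfolding vec using c0 beta
    by (simp add: norm_sum[THEN order_trans] mult_left_mono sum_mono order_trans[OF norm_sum])
  also have "\<dots> \<le> c * (\<Sum>j<t. \<beta>1 ^ j * (Lc * (real j * (real j + 1) * (\<eta> * C / sqrt (real t)))))"
  proof (rule mult_left_mono[OF sum_mono c0])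
    fix j assume "j \<in> {..<t}"
    then have j: "j \<le> n" using n by simp
    have "norm (G (TH (n - j)) - G (TH n)) = dist (G (TH (n - j))) (G (TH n))" by (simp add: dist_norm)
    also have "\<dots> \<le> Lc * dist (TH (n - j)) (TH n)" by (rule lipschitz_onD[OF lip]) auto
    also have "\<dots> \<le> Lc * (real j * (real j + 1) * (\<eta> * C / sqrt (real t)))"
      using disp2[OF j] Lc0 by (intro mult_left_mono) (auto simp: dist_norm norm_minus_commute)
    finally show "\<beta>1 ^ j * norm (G (TH (n - j)) - G (TH n)) \<le> \<beta>1 ^ j * (Lc * (real j * (real j + 1) * (\<eta> * C / sqrt (real t))))"
      using beta by (intro mult_left_mono) auto
  qed
  also have "\<dots> = (Lc * (\<eta> * C / sqrt (real t))) * (c * (\<Sum>j<t. real j * (real j + 1) * \<beta>1 ^ j))"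
    by (simp add: sum_distrib_left sum_distrib_right mult_ac)
  also have "\<dots> \<le> (Lc * (\<eta> * C / sqrt (real t))) * (2 * \<beta>1 / (1 - \<beta>1)\<^sup>2)"
    unfolding c_def using S_bound[of \<beta>1 t] beta b1lt t Lc0 eta C0
    by (intro mult_left_mono) auto
  finally have N: "norm ((1 / (1 - \<beta>1 ^ t)) *\<^sub>R MM t - G (TH (t - 1))) \<le> (Lc * (\<eta> * C / sqrt (real t))) * (2 * \<beta>1 / (1 - \<beta>1)\<^sup>2)" .
  have "norm1 ((1 / (1 - \<beta>1 ^ t)) *\<^sub>R MM t - G (TH (t - 1))) \<le> sqrt d * ((Lc * (\<eta> * C / sqrt (real t))) * (2 * \<beta>1 / (1 - \<beta>1)\<^sup>2))"
    using norm1_le[of "(1 / (1 - \<beta>1 ^ t)) *\<^sub>R MM t - G (TH (t - 1))"] N unfolding d_def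
    by (meson mult_left_mono order_trans real_sqrt_ge_zero of_nat_0_le_iff)
  also have "\<dots> = 2 * \<beta>1 * sqrt d * Lc * C * \<eta> / ((1 - \<beta>1)\<^sup>2 * sqrt (real t))"
    by (simp add: field_simps)
  also have "\<dots> \<le> 2 * sqrt 2 * \<beta>1 * sqrt d * Lc * C * \<eta> / ((1 - \<beta>1)\<^sup>2 * sqrt (real t))"
  proof -
    define X where "X = \<beta>1 * sqrt d * Lc * C * \<eta> / ((1 - \<beta>1)\<^sup>2 * sqrt (real t))"
    have X0: "0 \<le> X" using beta Lc0 C0 eta unfolding d_def X_def by simp
    have e: "k * \<beta>1 * sqrt d * Lc * C * \<eta> / ((1 - \<beta>1)\<^sup>2 * sqrt (real t)) = k * X" for k
      unfolding X_def by (simp add: mult.assoc)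
    have "2 * X \<le> (2 * sqrt 2) * X" using X0 by (intro mult_right_mono) auto
    then show ?thesis unfolding e .
  qed
  finally show ?thesis unfolding Let_def d_def \<eta>s_def C_def MM_def TH_def by simp
qed

end
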